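(* Let $\Sigma$ be an alphabet, $n\ge1$, $L\ge n$. Let $h_1:\Sigma\to\mathrm{GF}(2)[x]/(x^L+1)$ be a random function whose values $h_1(c)$, $c\in\Sigma$, are mutually independent and uniformly distributed on $\mathrm{GF}(2)[x]/(x^L+1)$, and define $h(a_1,\dots,a_n)=h_1(a_1)x^{n-1}+\cdots+h_1(a_{n-1})x+h_1(a_n)$ computed in $\mathrm{GF}(2)[x]/(x^L+1)$. Then: (i) if $n$ is even, $h$ is not uniform; indeed for any $a\in\Sigma$, $P(h(a,a,\dots,a)=0)\ge 2^{-(L-1)}$. (ii) If $n\ge 2$ and $|\Sigma|\ge2$, there exist distinct $n$-grams $w_1,w_2$ with $P(h(w_1)=h(w_2))\ge 2^{-(L-1)}>2^{-L}$; hence $h$ is not 2-universal and not pairwise independent.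
   Context: This hash family is called Cyclic. Elements of $\mathrm{GF}(2)[x]/(x^L+1)$ are identified with polynomials of degree at most $L-1$ over $\mathrm{GF}(2)$ (equivalently $L$-bit integers), and multiplication by $x$ is a cyclic left rotation of the bits. Uniform means $P(h(w)=y)=2^{-L}$ for all $n$-grams $w$ and all $y$; 2-universal means $P(h(w_1)=h(w_2))\le 2^{-L}$ for all distinct $w_1,w_2$. *)

theory Defs
  imports "HOL-Probability.Probability" "HOL-Library.Z2" "HOL-Computational_Algebra.Polynomial"
begin

text \<open>The ring GF(2)[x]/(x^L+1): elements are represented by their canonical
  representatives, the polynomials over GF(2) (type bit) of degree at most L-1.\<close>

definition cyc_elems :: "nat \<Rightarrow> bit poly set" where
  "cyc_elems L = {p. p = 0 \<or> degree p < L}"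

definition cyc_modulus :: "nat \<Rightarrow> bit poly" where
  "cyc_modulus L = monom 1 L + 1"

definition cyc_red :: "nat \<Rightarrow> bit poly \<Rightarrow> bit poly" where
  "cyc_red L p = p mod cyc_modulus L"

definition cyclic_hash :: "nat \<Rightarrow> nat \<Rightarrow> ('a \<Rightarrow> bit poly) \<Rightarrow> 'a list \<Rightarrow> bit poly" where
  "cyclic_hash L n h1 w = cyc_red L (\<Sum>i<n. h1 (w ! i) * monom 1 (n - 1 - i))"

text \<open>Random h1: values h1(c), c in Sigma, independent and uniform on the ring,
  i.e. h1 is uniformly distributed over all functions Sigma -> ring.\<close>

definition random_h1 :: "nat \<Rightarrow> ('a::finite \<Rightarrow> bit poly) pmf" where
  "random_h1 L = pmf_of_set {f. \<forall>c. f c \<in> cyc_elems L}"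

definition ngrams :: "nat \<Rightarrow> 'a list set" where
  "ngrams n = {w. length w = n}"

definition uniform_family :: "nat \<Rightarrow> nat \<Rightarrow> ('a list \<Rightarrow> bit poly) pmf \<Rightarrow> bool" where
  "uniform_family L n H \<longleftrightarrow>
     (\<forall>w \<in> ngrams n. \<forall>y \<in> cyc_elems L. measure_pmf.prob H {h. h w = y} = 1 / 2 ^ L)"

definition two_universal :: "nat \<Rightarrow> nat \<Rightarrow> ('a list \<Rightarrow> bit poly) pmf \<Rightarrow> bool" where
  "two_universal L n H \<longleftrightarrow>
     (\<forall>w1 \<in> ngrams n. \<forall>w2 \<in> ngrams n. w1 \<noteq> w2 \<longrightarrow>
        measure_pmf.prob H {h. h w1 = h w2} \<le> 1 / 2 ^ L)"

definition pairwise_independent :: "nat \<Rightarrow> nat \<Rightarrow> ('a list \<Rightarrow> bit poly) pmf \<Rightarrow> bool" where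
  "pairwise_independent L n H \<longleftrightarrow>
     (\<forall>w1 \<in> ngrams n. \<forall>w2 \<in> ngrams n. w1 \<noteq> w2 \<longrightarrow>
       (\<forall>y1 \<in> cyc_elems L. \<forall>y2 \<in> cyc_elems L.
          measure_pmf.prob H {h. h w1 = y1 \<and> h w2 = y2} = 1 / 2 ^ (2 * L)))"

definition cyclic_family :: "nat \<Rightarrow> nat \<Rightarrow> ('a::finite list \<Rightarrow> bit poly) pmf" where
  "cyclic_family L n = map_pmf (cyclic_hash L n) (random_h1 L)"

end

theory Submission
  imports Defs
begin

abbreviation X :: "bit poly" where "X \<equiv> [:0,1:]"

lemma bp_neg[simp]: "-(p::bit poly) = p"
  by (simp add: poly_eq_iff)

lemma bp_diff: "(p::bit poly) - q = p + q"
  by (metis bp_neg diff_conv_add_uminus)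

lemma monom1: "monom (1::bit) n = X ^ n"
  by (simp add: monom_altdef)

definition gL :: "nat \<Rightarrow> bit poly" where "gL L = (\<Sum>i<L. X ^ i)"

lemma gL_mod: "cyc_modulus L = (X + 1) * gL L"
proof -
  have "X ^ L - 1 = (X - 1) * gL L" unfolding gL_def by (rule power_diff_1_eq)
  thus ?thesis by (simp add: cyc_modulus_def monom1 bp_diff)
qed

lemma coeff_gL: "coeff (gL L) j = (if j < L then 1 else 0)"
  unfolding gL_def by (simp add: coeff_sum monom1[symmetric] coeff_monom)

lemma gL_in: "L \<ge> 1 \<Longrightarrow> gL L \<in> cyc_elems L"
proof -
  assume L: "L \<ge> 1"
  have "degree (gL L) \<le> L - 1" by (rule degree_le) (auto simp: coeff_gL)
  thus ?thesis using L unfolding cyc_elems_def by auto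
qed

lemma gL_nz: "L \<ge> 1 \<Longrightarrow> gL L \<noteq> 0"
  by (metis coeff_gL coeff_0 less_le_trans zero_less_one zero_neq_one)

lemma degree_mod: "degree (cyc_modulus L) = L"
  unfolding cyc_modulus_def
  by (cases L) (auto simp: degree_add_eq_left degree_monom_eq monom_0 one_pCons[symmetric])

lemma hash_in: "L \<ge> 1 \<Longrightarrow> cyclic_hash L n h1 w \<in> cyc_elems L"
proof -
  assume L: "L \<ge> 1"
  have M0: "cyc_modulus L \<noteq> 0" using degree_mod[of L] L by auto
  let ?p = "\<Sum>i<n. h1 (w ! i) * monom 1 (n - 1 - i)"
  show ?thesis
  proof (cases "?p mod cyc_modulus L = 0")
    case False
    hence "\<not> cyc_modulus L dvd ?p" by auto
    from degree_mod_less_degree[OF M0 this] show ?thesis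
      by (simp add: cyclic_hash_def cyc_red_def cyc_elems_def degree_mod)
  qed (simp add: cyclic_hash_def cyc_red_def cyc_elems_def)
qed

lemma UNIV_bit: "(UNIV :: bit set) = {0,1}"
  by (auto intro: bit.exhaust)

lemma card_cyc: "card (cyc_elems L) = 2 ^ L" "finite (cyc_elems L)"
proof -
  let ?S = "{xs::bit list. set xs \<subseteq> UNIV \<and> length xs = L}"
  have inj: "inj_on Poly ?S"
  proof (rule inj_onI)
    fix xs ys assume xs: "xs \<in> ?S" and ys: "ys \<in> ?S" and e: "Poly xs = Poly ys"
    show "xs = ys"
    proof (rule nth_equalityI)
      show "length xs = length ys" using xs ys by simp
      fix i assume "i < length xs"
      moreover have "coeff (Poly xs) i = coeff (Poly ys) i" using e by simp
      ultimately show "xs ! i = ys ! i" using xs ys by (simp add: nth_default_def)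
    qed
  qed
  have img: "Poly ` ?S = cyc_elems L"
  proof
    show "Poly ` ?S \<subseteq> cyc_elems L"
    proof
      fix p assume "p \<in> Poly ` ?S"
      then obtain xs where xs: "length xs = L" "p = Poly xs" by auto
      show "p \<in> cyc_elems L"
      proof (cases "p = 0")
        case False
        have "degree p \<le> L - 1" by (rule degree_le) (auto simp: xs nth_default_def)
        moreover have "L \<noteq> 0" using False xs by auto
        ultimately show ?thesis by (auto simp: cyc_elems_def)
      qed (simp add: cyc_elems_def)
    qed
    show "cyc_elems L \<subseteq> Poly ` ?S"
    proof
      fix p assume p: "p \<in> cyc_elems L"
      have "p = Poly (map (coeff p) [0..<L])"
      proof (rule poly_eqI)
        fix n
        show "coeff p n = coeff (Poly (map (coeff p) [0..<L])) n"
        proof (cases "n < L")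
          case False
          hence "coeff p n = 0" using p by (cases "p = 0") (auto simp: cyc_elems_def intro!: coeff_eq_0)
          thus ?thesis using False by (simp add: nth_default_def)
        qed (simp add: nth_default_def)
      qed
      thus "p \<in> Poly ` ?S" by (intro image_eqI) auto
    qed
  qed
  have "card (cyc_elems L) = card ?S" using card_image[OF inj] img by simp
  also have "\<dots> = 2 ^ L" using card_lists_length_eq[of "UNIV::bit set" L] by (simp add: UNIV_bit numeral_2_eq_2)
  finally show "card (cyc_elems L) = 2 ^ L" .
  have "finite ?S" using finite_lists_length_eq[of "UNIV::bit set" L] by (simp add: UNIV_bit)
  hence "finite (Poly ` ?S)" by (rule finite_imageI)
  thus "finite (cyc_elems L)" using img by simp
qed

lemma shift_prob:
  fixes A :: "'b::ab_group_add set" and a :: "'a::finite" and c :: "('a \<Rightarrow> 'b) \<Rightarrow> 'b"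
  assumes fin: "finite A" and A0: "0 \<in> A"
    and cl: "\<And>x y. x\<in>A \<Longrightarrow> y\<in>A \<Longrightarrow> x+y \<in> A" "\<And>x. x\<in>A \<Longrightarrow> -x \<in> A"
    and c: "\<And>f y. c (f(a:=y)) = c f" and cA: "\<And>f. (\<forall>x. f x \<in> A) \<Longrightarrow> c f \<in> A"
    and t: "t \<in> A"
  shows "measure (pmf_of_set {f. \<forall>x. f x \<in> A}) {f. f a - c f = t} = 1 / real (card A)"
proof -
  define F where "F = {f::'a\<Rightarrow>'b. \<forall>x. f x \<in> A}"
  have FP: "F = PiE UNIV (\<lambda>_. A)" unfolding F_def PiE_UNIV_domain by auto
  have finF: "finite F" unfolding FP using fin by (simp add: finite_PiE)
  have neF: "F \<noteq> {}" using A0 unfolding F_def by auto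
  define E where "E s = {f\<in>F. f a - c f = s}" for s
  have cardE: "card (E s) = card (E 0)" if s: "s \<in> A" for s
  proof -
    have "bij_betw (\<lambda>f. f(a := f a + s)) (E 0) (E s)"
    proof (rule bij_betw_byWitness[where f'="\<lambda>f. f(a := f a - s)"])
      show "\<forall>f\<in>E 0. (f(a := f a + s))(a := (f(a := f a + s)) a - s) = f" by simp
      show "\<forall>f\<in>E s. (f(a := f a - s))(a := (f(a := f a - s)) a + s) = f" by simp
      show "(\<lambda>f. f(a := f a + s)) ` E 0 \<subseteq> E s"
      proof
        fix g assume "g \<in> (\<lambda>f. f(a := f a + s)) ` E 0"
        then obtain f where g: "g = f(a := f a + s)" and f: "\<forall>x. f x \<in> A" "f a - c f = 0"
          unfolding E_def F_def by blast
        have fa: "f a \<in> A" using f(1) by blast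
        have "f a + s \<in> A" by (rule cl(1)[OF fa s])
        hence "\<forall>x. g x \<in> A" using f(1) g by simp
        moreover have "g a - c g = s" using f(2) g by (simp add: c)
        ultimately show "g \<in> E s" unfolding E_def F_def by blast
      qed
      show "(\<lambda>f. f(a := f a - s)) ` E s \<subseteq> E 0"
      proof
        fix g assume "g \<in> (\<lambda>f. f(a := f a - s)) ` E s"
        then obtain f where g: "g = f(a := f a - s)" and f: "\<forall>x. f x \<in> A" "f a - c f = s"
          unfolding E_def F_def by blast
        have ms: "- s \<in> A" using s by (rule cl(2))
        have fa: "f a \<in> A" using f(1) by blast
        have "f a + - s \<in> A" by (rule cl(1)[OF fa ms])
        hence "f a - s \<in> A" by (simp only: diff_conv_add_uminus)
        hence "\<forall>x. g x \<in> A" using f(1) g by simp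
        moreover have "g a - c g = 0"
        proof -
          have fe: "f a = s + c f" using f(2) by (simp add: diff_eq_eq)
          show ?thesis using g by (simp add: c fe)
        qed
        ultimately show "g \<in> E 0" unfolding E_def F_def by blast
      qed
    qed
    thus ?thesis by (simp add: bij_betw_same_card)
  qed
  have U: "F = (\<Union>s\<in>A. E s)"
  proof
    show "F \<subseteq> (\<Union>s\<in>A. E s)"
    proof
      fix f assume f: "f \<in> F"
      hence f1: "\<forall>x. f x \<in> A" unfolding F_def by blast
      hence "c f \<in> A" by (rule cA)
      hence "- c f \<in> A" by (rule cl(2))
      moreover have "f a \<in> A" using f1 by blast
      ultimately have "f a + - c f \<in> A" using cl(1) by blast
      hence "f a - c f \<in> A" by (simp only: diff_conv_add_uminus)
      thus "f \<in> (\<Union>s\<in>A. E s)" using f unfolding E_def by blast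
    qed
  qed (auto simp: E_def)
  have "card F = (\<Sum>s\<in>A. card (E s))"
    unfolding U using fin finF
    by (intro card_UN_disjoint) (auto simp: E_def)
  also have "\<dots> = (\<Sum>s\<in>A. card (E 0))" using cardE by (intro sum.cong) blast+
  also have "\<dots> = card A * card (E 0)" by simp
  finally have cF: "card F = card A * card (E 0)" .
  have "card F > 0" using finF neF by (simp add: card_gt_0_iff)
  hence pos: "card (E 0) > 0" "card A > 0" using cF by auto
  have "measure (measure_pmf (pmf_of_set F)) {f. f a - c f = t} = real (card (F \<inter> {f. f a - c f = t})) / real (card F)"
    using finF neF by (simp add: measure_pmf_of_set)
  also have "F \<inter> {f. f a - c f = t} = E t" unfolding E_def by auto
  also have "real (card (E t)) / real (card F) = 1 / real (card A)"
    using cF cardE[OF t] pos by (simp add: field_simps)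
  finally show ?thesis unfolding F_def .
qed

lemma hash_sum: "cyclic_hash L n f w = cyc_red L (\<Sum>i<n. f (w ! i) * X ^ (n - Suc i))"
  unfolding cyclic_hash_def by (simp add: monom1)

lemma dvd_geo: assumes "even n" shows "(X + 1) dvd (\<Sum>i<n. X ^ i)"
proof -
  obtain m where n: "n = 2 * m" using assms by auto
  have "poly (\<Sum>i<n. X ^ i) 1 = of_nat n" by (simp add: poly_sum)
  also have "(of_nat n :: bit) = 0" by (simp add: n)
  finally have "[:-1, 1:] dvd (\<Sum>i<n. X ^ i)" by (simp add: poly_eq_0_iff_dvd)
  moreover have "[:-1, 1:] = X + (1::bit poly)" by (simp add: one_pCons)
  ultimately show ?thesis by simp
qed

lemma hash_rep_zero:
  assumes "even n" "f a \<in> {0, gL L}"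
  shows "cyclic_hash L n f (replicate n a) = 0"
proof -
  have "(\<Sum>i<n. f (replicate n a ! i) * X ^ (n - Suc i)) = (\<Sum>i<n. f a * X ^ (n - Suc i))"
    by (rule sum.cong) auto
  also have "\<dots> = f a * (\<Sum>i<n. X ^ (n - Suc i))" by (simp add: sum_distrib_left)
  also have "(\<Sum>i<n. X ^ (n - Suc i)) = (\<Sum>i<n. X ^ i)" by (rule sum.nat_diff_reindex)
  finally have e: "(\<Sum>i<n. f (replicate n a ! i) * X ^ (n - Suc i)) = f a * (\<Sum>i<n. X ^ i)" .
  obtain q where q: "(\<Sum>i<n. X ^ i) = (X + 1) * q" using dvd_geo[OF assms(1)] by blast
  have "cyc_modulus L dvd f a * (\<Sum>i<n. X ^ i)"
  proof (cases "f a = 0")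
    case False
    hence "f a = gL L" using assms(2) by auto
    hence "f a * (\<Sum>i<n. X ^ i) = cyc_modulus L * q" by (simp add: q gL_mod mult_ac)
    thus ?thesis by (rule dvdI)
  qed simp
  thus ?thesis unfolding hash_sum e cyc_red_def by simp
qed

lemma hash_swap:
  assumes n: "n \<ge> 2" and d: "f a - f b \<in> {0, gL L}"
  shows "cyclic_hash L n f (a # b # replicate (n-2) a) = cyclic_hash L n f (b # a # replicate (n-2) a)"
proof -
  define w1 where "w1 = a # b # replicate (n-2) a"
  define w2 where "w2 = b # a # replicate (n-2) a"
  define T where "T i = (f (w1 ! i) - f (w2 ! i)) * X ^ (n - Suc i)" for i
  have "(\<Sum>i<n. f (w1 ! i) * X ^ (n - Suc i)) - (\<Sum>i<n. f (w2 ! i) * X ^ (n - Suc i))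
       = (\<Sum>i<n. T i)" unfolding T_def by (simp add: sum_subtractf left_diff_distrib)
  also have "\<dots> = (\<Sum>i<2. T i)"
  proof (rule sum.mono_neutral_right)
    show "\<forall>i\<in>{..<n} - {..<2}. T i = 0"
    proof
      fix i assume "i \<in> {..<n} - {..<2}"
      hence i: "2 \<le> i" "i < n" by auto
      define k where "k = i - 2"
      have "i = Suc (Suc k)" "k < n - 2" using i unfolding k_def by arith+
      thus "T i = 0" by (simp add: T_def w1_def w2_def)
    qed
  qed (use n in auto)
  also have "\<dots> = T 0 + T 1" by (simp add: numeral_2_eq_2)
  also have "\<dots> = (f a - f b) * (X ^ (n - 2) * (X + 1))"
  proof -
    have e1: "n - Suc 0 = Suc (n - 2)" "n - Suc 1 = n - 2" using n by auto
    have e2: "f b - f a = f a - f b" by (simp add: bp_diff add.commute)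
    have "T 0 + T 1 = (f a - f b) * X ^ Suc (n - 2) + (f a - f b) * X ^ (n - 2)"
      unfolding T_def w1_def w2_def using e1 e2 by simp
    also have "\<dots> = (f a - f b) * (X ^ (n - 2) * (X + 1))"
      by (simp only: power_Suc distrib_left distrib_right mult_ac mult_1_left mult_1_right)
    finally show ?thesis .
  qed
  finally have e: "(\<Sum>i<n. f (w1 ! i) * X ^ (n - Suc i)) - (\<Sum>i<n. f (w2 ! i) * X ^ (n - Suc i))
       = (f a - f b) * (X ^ (n - 2) * (X + 1))" .
  have "cyc_modulus L dvd (f a - f b) * (X ^ (n - 2) * (X + 1))"
  proof (cases "f a - f b = 0")
    case False
    hence eq: "f a - f b = gL L" using d by auto
    have "(f a - f b) * (X ^ (n - 2) * (X + 1)) = ((X + 1) * gL L) * X ^ (n - 2)"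
      unfolding eq by (simp only: mult_ac)
    hence "(f a - f b) * (X ^ (n - 2) * (X + 1)) = cyc_modulus L * X ^ (n - 2)"
      by (simp only: gL_mod)
    thus ?thesis by (rule dvdI)
  qed simp
  thus ?thesis unfolding hash_sum cyc_red_def w1_def[symmetric] w2_def[symmetric]
    by (simp only: mod_eq_dvd_iff e)
qed

lemma cyc_facts:
  shows "finite (cyc_elems L)" "0 \<in> cyc_elems L"
    "\<And>x y. x \<in> cyc_elems L \<Longrightarrow> y \<in> cyc_elems L \<Longrightarrow> x + y \<in> cyc_elems L"
    "\<And>x. x \<in> cyc_elems L \<Longrightarrow> - x \<in> cyc_elems L"
proof -
  show "finite (cyc_elems L)" by (rule card_cyc(2))
  show "0 \<in> cyc_elems L" by (simp add: cyc_elems_def)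
  fix x y assume x: "x \<in> cyc_elems L"
  show "- x \<in> cyc_elems L" using x by (simp add: cyc_elems_def)
  assume y: "y \<in> cyc_elems L"
  show "x + y \<in> cyc_elems L"
  proof (cases "x + y = 0")
    case False
    have "degree (x + y) \<le> max (degree x) (degree y)" by (rule degree_add_le_max)
    moreover have "x \<noteq> 0 \<or> y \<noteq> 0" using False by auto
    ultimately show ?thesis using x y False by (auto simp: cyc_elems_def)
  qed (simp add: cyc_elems_def)
qed

lemma prob_pt:
  fixes a :: "'a::finite"
  assumes c: "\<And>f y. c (f(a:=y)) = c f" and cA: "\<And>f. (\<forall>x. f x \<in> cyc_elems L) \<Longrightarrow> c f \<in> cyc_elems L"
    and t: "t \<in> cyc_elems L"
  shows "measure_pmf.prob (random_h1 L :: ('a \<Rightarrow> bit poly) pmf) {f. f a - c f = t} = 1 / 2 ^ L"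
  unfolding random_h1_def
  using shift_prob[of "cyc_elems L" c a t, OF cyc_facts c cA t] card_cyc(1)[of L] by simp

lemma prob_two_gen:
  fixes a :: "'a::finite"
  assumes L: "L \<ge> 1" and c: "\<And>f y. c (f(a:=y)) = c f"
    and cA: "\<And>f. (\<forall>x. f x \<in> cyc_elems L) \<Longrightarrow> c f \<in> cyc_elems L"
    and sub: "\<And>f. f a - c f \<in> {0, gL L} \<Longrightarrow> P f"
  shows "measure_pmf.prob (random_h1 L :: ('a \<Rightarrow> bit poly) pmf) {f. P f} \<ge> 1 / 2 ^ (L - 1)"
proof -
  let ?M = "random_h1 L :: ('a \<Rightarrow> bit poly) pmf"
  have p0: "measure_pmf.prob ?M {f. f a - c f = 0} = 1 / 2 ^ L"
    by (rule prob_pt[OF c cA]) (auto simp: cyc_facts)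
  have pg: "measure_pmf.prob ?M {f. f a - c f = gL L} = 1 / 2 ^ L"
    by (rule prob_pt[OF c cA]) (simp_all add: gL_in[OF L])
  have dis: "{f. f a - c f = 0} \<inter> {f. f a - c f = gL L} = {}" using gL_nz[OF L] by auto
  have "measure_pmf.prob ?M ({f. f a - c f = 0} \<union> {f. f a - c f = gL L}) = 1 / 2 ^ L + 1 / 2 ^ L"
    using measure_pmf.finite_measure_Union[OF _ _ dis, of ?M] p0 pg by simp
  also have "(1::real) / 2 ^ L + 1 / 2 ^ L = 1 / 2 ^ (L - 1)"
  proof -
    obtain k where k: "L = Suc k" using L by (cases L) auto
    show ?thesis by (simp add: k)
  qed
  finally have e: "measure_pmf.prob ?M ({f. f a - c f = 0} \<union> {f. f a - c f = gL L}) = 1 / 2 ^ (L - 1)" .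
  have "measure_pmf.prob ?M ({f. f a - c f = 0} \<union> {f. f a - c f = gL L}) \<le> measure_pmf.prob ?M {f. P f}"
    by (rule measure_pmf.finite_measure_mono) (auto intro: sub)
  thus ?thesis using e by simp
qed

lemma half_gt: "L \<ge> 1 \<Longrightarrow> (1 / 2 ^ (L - 1) :: real) > 1 / 2 ^ L"
  by (cases L) (auto simp: field_simps)

theorem mainTheorem5:
  fixes n L :: nat
  assumes "n \<ge> 1" and "L \<ge> n"
  shows "(even n \<longrightarrow>
            \<not> uniform_family L n (cyclic_family L n :: ('a::finite list \<Rightarrow> bit poly) pmf) \<and>
            (\<forall>a::'a. measure_pmf.prob (random_h1 L)
                        {h1. cyclic_hash L n h1 (replicate n a) = 0} \<ge> 1 / 2 ^ (L - 1)))
       \<and> (n \<ge> 2 \<and> CARD('a) \<ge> 2 \<longrightarrow>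
            (\<exists>w1 w2 :: 'a list. length w1 = n \<and> length w2 = n \<and> w1 \<noteq> w2 \<and>
               measure_pmf.prob (random_h1 L)
                 {h1. cyclic_hash L n h1 w1 = cyclic_hash L n h1 w2} \<ge> 1 / 2 ^ (L - 1) \<and>
               (1 / 2 ^ (L - 1) :: real) > 1 / 2 ^ L) \<and>
            \<not> two_universal L n (cyclic_family L n :: ('a list \<Rightarrow> bit poly) pmf) \<and>
            \<not> pairwise_independent L n (cyclic_family L n :: ('a list \<Rightarrow> bit poly) pmf))"
proof -
  have L: "L \<ge> 1" using assms by simp
  let ?R = "random_h1 L :: ('a \<Rightarrow> bit poly) pmf"
  have fam: "measure_pmf.prob (cyclic_family L n) {h. P h} = measure_pmf.prob ?R {f. P (cyclic_hash L n f)}"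
    for P :: "('a list \<Rightarrow> bit poly) \<Rightarrow> bool"
    unfolding cyclic_family_def by (simp add: vimage_def)
  have part1: "even n \<longrightarrow>
            \<not> uniform_family L n (cyclic_family L n :: ('a::finite list \<Rightarrow> bit poly) pmf) \<and>
            (\<forall>a::'a. measure_pmf.prob (random_h1 L)
                        {h1. cyclic_hash L n h1 (replicate n a) = 0} \<ge> 1 / 2 ^ (L - 1))"
  proof
    assume ev: "even n"
    have P: "measure_pmf.prob ?R {h1. cyclic_hash L n h1 (replicate n a) = 0} \<ge> 1 / 2 ^ (L - 1)" for a
      by (rule prob_two_gen[where c="\<lambda>_. 0", OF L]) (auto simp: cyc_facts intro: hash_rep_zero[OF ev])
    moreover have "\<not> uniform_family L n (cyclic_family L n :: ('a::finite list \<Rightarrow> bit poly) pmf)"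
    proof
      assume u: "uniform_family L n (cyclic_family L n :: ('a::finite list \<Rightarrow> bit poly) pmf)"
      define a :: 'a where "a = undefined"
      have "replicate n a \<in> ngrams n" by (simp add: ngrams_def)
      hence "measure_pmf.prob (cyclic_family L n) {h. h (replicate n a) = 0} = 1 / 2 ^ L"
        using u cyc_facts(2) unfolding uniform_family_def by blast
      hence "measure_pmf.prob ?R {h1. cyclic_hash L n h1 (replicate n a) = 0} = 1 / 2 ^ L"
        by (simp add: fam)
      thus False using P[of a] half_gt[OF L] by simp
    qed
    ultimately show "\<not> uniform_family L n (cyclic_family L n :: ('a::finite list \<Rightarrow> bit poly) pmf) \<and>
            (\<forall>a::'a. measure_pmf.prob (random_h1 L)
                        {h1. cyclic_hash L n h1 (replicate n a) = 0} \<ge> 1 / 2 ^ (L - 1))" by blast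
  qed
  have part2: "n \<ge> 2 \<and> CARD('a) \<ge> 2 \<longrightarrow>
            (\<exists>w1 w2 :: 'a list. length w1 = n \<and> length w2 = n \<and> w1 \<noteq> w2 \<and>
               measure_pmf.prob (random_h1 L)
                 {h1. cyclic_hash L n h1 w1 = cyclic_hash L n h1 w2} \<ge> 1 / 2 ^ (L - 1) \<and>
               (1 / 2 ^ (L - 1) :: real) > 1 / 2 ^ L) \<and>
            \<not> two_universal L n (cyclic_family L n :: ('a list \<Rightarrow> bit poly) pmf) \<and>
            \<not> pairwise_independent L n (cyclic_family L n :: ('a list \<Rightarrow> bit poly) pmf)"
  proof
    assume h: "n \<ge> 2 \<and> CARD('a) \<ge> 2"
    hence n2: "n \<ge> 2" by simp
    obtain a b :: 'a where ab: "a \<noteq> b"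
    proof -
      have "\<exists>a b :: 'a. a \<noteq> b"
      proof (rule ccontr)
        assume "\<not> (\<exists>a b :: 'a. a \<noteq> b)"
        hence "(UNIV :: 'a set) = {undefined}" by auto
        hence "CARD('a) = card {undefined::'a}" by (rule arg_cong)
        hence "CARD('a) = 1" by simp
        thus False using h by simp
      qed
      thus ?thesis using that by blast
    qed
    define w1 where "w1 = a # b # replicate (n-2) a"
    define w2 where "w2 = b # a # replicate (n-2) a"
    have len: "length w1 = n" "length w2 = n" using n2 by (auto simp: w1_def w2_def)
    have ne: "w1 \<noteq> w2" using ab by (simp add: w1_def w2_def)
    have P: "measure_pmf.prob ?R {h1. cyclic_hash L n h1 w1 = cyclic_hash L n h1 w2} \<ge> 1 / 2 ^ (L - 1)"
      by (rule prob_two_gen[where c="\<lambda>f. f b" and a=a, OF L])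
         (use ab in \<open>auto simp: w1_def w2_def intro: hash_swap[OF n2]\<close>)
    have not2: "\<not> two_universal L n (cyclic_family L n :: ('a list \<Rightarrow> bit poly) pmf)"
    proof
      assume "two_universal L n (cyclic_family L n :: ('a list \<Rightarrow> bit poly) pmf)"
      hence "measure_pmf.prob (cyclic_family L n) {h. h w1 = h w2} \<le> 1 / 2 ^ L"
        using len ne unfolding two_universal_def ngrams_def by blast
      hence "measure_pmf.prob ?R {h1. cyclic_hash L n h1 w1 = cyclic_hash L n h1 w2} \<le> 1 / 2 ^ L"
        by (simp add: fam)
      thus False using P half_gt[OF L] by simp
    qed
    have notp: "\<not> pairwise_independent L n (cyclic_family L n :: ('a list \<Rightarrow> bit poly) pmf)"
    proof
      assume pi: "pairwise_independent L n (cyclic_family L n :: ('a list \<Rightarrow> bit poly) pmf)"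
      have each: "measure_pmf.prob ?R {h1. cyclic_hash L n h1 w1 = y \<and> cyclic_hash L n h1 w2 = y} = 1 / 2 ^ (2 * L)"
        if y: "y \<in> cyc_elems L" for y
      proof -
        have "measure_pmf.prob (cyclic_family L n) {h. h w1 = y \<and> h w2 = y} = 1 / 2 ^ (2 * L)"
          using pi len ne y unfolding pairwise_independent_def ngrams_def by blast
        thus ?thesis by (simp add: fam)
      qed
      have U: "{h1. cyclic_hash L n h1 w1 = cyclic_hash L n h1 w2}
          = (\<Union>y\<in>cyc_elems L. {h1. cyclic_hash L n h1 w1 = y \<and> cyclic_hash L n h1 w2 = y})"
        using hash_in[OF L] by auto
      have "measure_pmf.prob ?R {h1. cyclic_hash L n h1 w1 = cyclic_hash L n h1 w2}
          = (\<Sum>y\<in>cyc_elems L. measure_pmf.prob ?R {h1. cyclic_hash L n h1 w1 = y \<and> cyclic_hash L n h1 w2 = y})"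
        unfolding U
        by (rule measure_pmf.finite_measure_finite_Union) (auto simp: cyc_facts disjoint_family_on_def)
      also have "\<dots> = (\<Sum>y\<in>cyc_elems L. 1 / 2 ^ (2 * L))" by (rule sum.cong) (simp_all add: each)
      also have "\<dots> = 2 ^ L / 2 ^ (2 * L)" by (simp add: card_cyc(1))
      also have "\<dots> = (1::real) / 2 ^ L" by (simp add: mult_2 power_add)
      finally show False using P half_gt[OF L] by simp
    qed
    show "(\<exists>w1 w2 :: 'a list. length w1 = n \<and> length w2 = n \<and> w1 \<noteq> w2 \<and>
               measure_pmf.prob (random_h1 L)
                 {h1. cyclic_hash L n h1 w1 = cyclic_hash L n h1 w2} \<ge> 1 / 2 ^ (L - 1) \<and>
               (1 / 2 ^ (L - 1) :: real) > 1 / 2 ^ L) \<and>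
            \<not> two_universal L n (cyclic_family L n :: ('a list \<Rightarrow> bit poly) pmf) \<and>
            \<not> pairwise_independent L n (cyclic_family L n :: ('a list \<Rightarrow> bit poly) pmf)"
      using len ne P half_gt[OF L] not2 notp by blast
  qed
  show ?thesis using part1 part2 by blast
qed

end
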